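(* Let $\rho$ be a probability measure on $\mathbb R$ with $\int\log(1+x^2)\rho(\mathrm dx)<+\infty$ and let $c>0$. For $M>0$ define the truncation $\rho^{[M]}(\mathrm ds)=\rho((-\infty,-M])\delta_{-M}(\mathrm ds)+\mathbbm 1_{(-M,M)}(s)\rho(\mathrm ds)+\rho([M,+\infty))\delta_M(\mathrm ds)$. Let $(\rho^{[M]})^{(c)}$ be the law of the random mean of $D_{c\rho^{[M]}}$ and $\rho^{(c)}$ the law of the random mean of $D_{c\rho}$. Then $(\rho^{[M]})^{(c)}\to\rho^{(c)}$ weakly as $M\to\infty$.
   Context: For a probability measure $\rho$ on $\mathbb R$ and $c>0$, the Dirichlet process $D_{c\rho}$ is the random probability measure on $\mathbb R$ such that for every finite measurable partition $A_1,\dots,A_k$ of $\mathbb R$, $(D_{c\rho}(A_1),\dots,D_{c\rho}(A_k))$ has the Dirichlet distribution $\mathrm{Dir}_{(c\rho(A_1),\dots,c\rho(A_k))}$. When $\int\log(1+x^2)\rho(\mathrm dx)<\infty$, the random mean $\int x\,D_{c\rho}(\mathrm dx)$ converges absolutely almost surely; its law is denoted $\rho^{(c)}$. *)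

theory Defs
  imports "HOL-Probability.Probability"
begin

definition gamma_density :: "real \<Rightarrow> real \<Rightarrow> real" where
  "gamma_density a x = (if x > 0 then x powr (a - 1) * exp (- x) / Gamma a else 0)"

definition gamma_measure :: "real \<Rightarrow> real measure" where
  "gamma_measure a = (if a = 0 then return borel 0
                      else density lborel (\<lambda>x. ennreal (gamma_density a x)))"

text \<open>Dirichlet distribution Dir_(alpha 0, ..., alpha (k-1)) on vectors indexed by {..<k}
  (Ferguson's construction: normalised independent Gamma(alpha i, 1) variables,
  which also covers zero parameters).\<close>
definition dirichlet :: "nat \<Rightarrow> (nat \<Rightarrow> real) \<Rightarrow> (nat \<Rightarrow> real) measure" where
  "dirichlet k alpha =
     distr (PiM {..<k} (\<lambda>i. gamma_measure (alpha i))) (PiM {..<k} (\<lambda>_. borel))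
       (\<lambda>y. \<lambda>i\<in>{..<k}. y i / (\<Sum>j<k. y j))"

definition is_dirichlet_process ::
  "'a measure \<Rightarrow> real \<Rightarrow> real measure \<Rightarrow> ('a \<Rightarrow> real measure) \<Rightarrow> bool" where
  "is_dirichlet_process N c \<rho> D \<longleftrightarrow>
     prob_space N \<and> D \<in> N \<rightarrow>\<^sub>M prob_algebra borel \<and>
     (\<forall>k (A :: nat \<Rightarrow> real set). k \<ge> 1 \<and> (\<forall>i<k. A i \<in> sets borel) \<and>
        disjoint_family_on A {..<k} \<and> (\<Union>i<k. A i) = UNIV \<longrightarrow>
        distr N (PiM {..<k} (\<lambda>_. borel)) (\<lambda>\<omega>. \<lambda>i\<in>{..<k}. measure (D \<omega>) (A i))
          = dirichlet k (\<lambda>i. c * measure \<rho> (A i)))"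

definition random_mean_law :: "'a measure \<Rightarrow> ('a \<Rightarrow> real measure) \<Rightarrow> real measure" where
  "random_mean_law N D = distr N borel (\<lambda>\<omega>. \<integral>x. x \<partial>(D \<omega>))"

text \<open>Truncation rho^[M]: mass of (-inf,-M] moved to -M, mass of [M,inf) moved to M.
  This is exactly the push-forward of rho under clamping to [-M,M].\<close>
definition truncate_measure :: "real \<Rightarrow> real measure \<Rightarrow> real measure" where
  "truncate_measure M \<rho> = distr \<rho> borel (\<lambda>x. max (- M) (min M x))"

definition weak_conv_at_top :: "(real \<Rightarrow> real measure) \<Rightarrow> real measure \<Rightarrow> bool" where
  "weak_conv_at_top \<mu> \<nu> \<longleftrightarrow>
     (\<forall>f :: real \<Rightarrow> real. continuous_on UNIV f \<and> bounded (range f) \<longrightarrow>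
        ((\<lambda>M. \<integral>x. f x \<partial>(\<mu> M)) \<longlongrightarrow> (\<integral>x. f x \<partial>\<nu>)) at_top)"

end

theory Submission
  imports Defs
begin

lemma sets_gamma[simp, measurable_cong]: "sets (gamma_measure a) = sets borel"
  by (simp add: gamma_measure_def)

lemma space_gamma[simp]: "space (gamma_measure a) = UNIV"
  using sets_eq_imp_space_eq[OF sets_gamma] by simp

lemma gd_alt: "gamma_density a x = indicator {0..} x * x powr (a - 1) / exp x / Gamma a"
  by (cases "x > 0") (auto simp: gamma_density_def exp_minus field_simps indicator_def)

lemma gd_meas[measurable]: "gamma_density a \<in> borel_measurable borel"
  unfolding gamma_density_def by measurable

lemma gd_nonneg: "a \<ge> 0 \<Longrightarrow> gamma_density a x \<ge> 0"
  by (cases "a = 0") (auto simp: gamma_density_def intro!: divide_nonneg_nonneg Gamma_real_nonneg)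

lemma Gamma_nn: "a > 0 \<Longrightarrow> (\<integral>\<^sup>+x. ennreal (gamma_density a x) \<partial>lborel) = 1"
proof -
  assume a: "a > 0"
  have "(\<integral>\<^sup>+x. ennreal (gamma_density a x) \<partial>lborel)
      = (\<integral>\<^sup>+x. ennreal (indicator {0..} x * x powr (a - 1) / exp x) * ennreal (1 / Gamma a) \<partial>lborel)"
    using Gamma_real_pos[OF a] by (intro nn_integral_cong) (simp add: gd_alt ennreal_mult'[symmetric] a)
  also have "\<dots> = ennreal (Gamma a) * ennreal (1 / Gamma a)"
    using Gamma_real_pos[OF a] by (subst nn_integral_multc) (auto simp: Gamma_conv_nn_integral_real[OF a])
  also have "\<dots> = ennreal (Gamma a * (1 / Gamma a))"
    using Gamma_real_pos[OF a] by (subst ennreal_mult) auto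
  also have "Gamma a * (1 / Gamma a) = 1" using Gamma_real_pos[OF a] by (simp del: Gamma_real_pos)
  finally show ?thesis by simp
qed

lemma gamma_prob: "a \<ge> 0 \<Longrightarrow> prob_space (gamma_measure a)"
proof (cases "a = 0")
  case True then show ?thesis by (simp add: gamma_measure_def prob_space_return)
next
  case False
  assume "a \<ge> 0" with False have a: "a > 0" by simp
  show ?thesis
    unfolding gamma_measure_def using False
    by (intro prob_spaceI) (simp add: emeasure_density[where A=UNIV, simplified] Gamma_nn[OF a])
qed

lemma Gamma_lower: fixes x :: real assumes "x \<ge> 0" shows "exp (-2) \<le> Gamma (x + 1)"
proof -
  have "ennreal (exp (-2)) = (\<integral>\<^sup>+t. ennreal (exp (-2)) * indicator {1..2::real} t \<partial>lborel)"
    by (simp add: nn_integral_cmult_indicator)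
  also have "\<dots> \<le> (\<integral>\<^sup>+t. ennreal (indicator {0..} t * t powr (x + 1 - 1) / exp t) \<partial>lborel)"
  proof (intro nn_integral_mono)
    fix t :: real
    show "ennreal (exp (-2)) * indicator {1..2} t \<le> ennreal (indicator {0..} t * t powr (x + 1 - 1) / exp t)"
    proof (cases "t \<in> {1..2}")
      case True
      have "1 \<le> t powr x" using True assms by (intro ge_one_powr_ge_zero) auto
      moreover have "exp (-2) \<le> exp (-t)" using True by simp
      then have "exp (-2) \<le> 1 / exp t" by (simp add: exp_minus inverse_eq_divide)
      ultimately have "exp (-2) \<le> t powr x / exp t"
        using divide_right_mono[of 1 "t powr x" "exp t"] by simp
      then show ?thesis using True by (auto intro!: ennreal_leI)
    qed simp
  qed
  also have "\<dots> = Gamma (x + 1)" using assms by (simp add: Gamma_conv_nn_integral_real)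
  finally have "ennreal (exp (-2)) \<le> ennreal (Gamma (x + 1))" .
  moreover have "Gamma (x + 1) > 0" using assms by (intro Gamma_real_pos) simp
  ultimately show ?thesis by (subst (asm) ennreal_le_iff) auto
qed

lemma int_powr:
  fixes b d :: real assumes b: "b > 0" and d: "d > 0"
  shows "(\<integral>\<^sup>+t. ennreal (indicator {0<..d} t * t powr (b - 1)) \<partial>lborel) = ennreal (d powr b / b)"
proof -
  have "((\<lambda>t. t powr (b - 1)) has_integral ((\<lambda>t. t powr b / b) d - (\<lambda>t. t powr b / b) 0)) {0..d}"
  proof (rule fundamental_theorem_of_calculus_interior)
    show "continuous_on {0..d} (\<lambda>t. t powr b / b)"
      using b by (intro continuous_intros continuous_on_powr') auto
    fix x assume x: "x \<in> {0<..<d}"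
    have "((\<lambda>t. t powr b / b) has_real_derivative (b * x powr (b - 1)) / b) (at x)"
      using x by (intro DERIV_cdivide has_real_derivative_powr) auto
    then show "((\<lambda>t. t powr b / b) has_vector_derivative x powr (b - 1)) (at x)"
      using b by (simp add: has_real_derivative_iff_has_vector_derivative[symmetric])
  qed (use d in auto)
  then have I: "((\<lambda>t. t powr (b - 1)) has_integral (d powr b / b)) {0..d}" by simp
  have "(\<integral>\<^sup>+t. ennreal (indicator {0<..d} t * t powr (b - 1)) \<partial>lborel)
     = (\<integral>\<^sup>+t. ennreal (indicator {0..d} t * t powr (b - 1)) \<partial>lborel)"
    by (intro nn_integral_cong) (auto simp: indicator_def)
  also have "\<dots> = ennreal (d powr b / b)"
    by (rule nn_integral_has_integral_lebesgue[OF _ I]) simp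
  finally show ?thesis .
qed

lemma int_inv:
  fixes s :: real assumes s: "s > 0" "s \<le> 1"
  shows "(\<integral>\<^sup>+t. ennreal (indicator {s..1} t * (1 / t)) \<partial>lborel) = ennreal (- ln s)"
proof -
  have "((\<lambda>t. 1 / t) has_integral (ln 1 - ln s)) {s..1}"
  proof (rule fundamental_theorem_of_calculus_interior)
    show "continuous_on {s..1} ln"
      using s by (intro continuous_intros) auto
    fix x assume x: "x \<in> {s<..<1}"
    have "(ln has_real_derivative 1 / x) (at x)"
      using x s by (auto intro!: derivative_eq_intros)
    then show "(ln has_vector_derivative 1 / x) (at x)"
      by (simp add: has_real_derivative_iff_has_vector_derivative[symmetric])
  qed (use s in auto)
  then have I: "((\<lambda>t. 1 / t) has_integral (- ln s)) {s..1}" by simp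
  show ?thesis
    by (rule nn_integral_has_integral_lebesgue[OF _ I]) (use s in auto)
qed

lemma ennreal_split: fixes A B G :: real shows "0 \<le> A \<Longrightarrow> 0 \<le> B \<Longrightarrow> 0 \<le> G \<Longrightarrow> ennreal (A*G + B*G) = ennreal A * ennreal G + ennreal B * ennreal G"
  by (metis ennreal_mult'' ennreal_plus mult_nonneg_nonneg)

lemma p1: fixes x a :: real assumes "0 < x" "x \<le> 1" "0 < a" shows "x powr (a - 1) \<le> 1 / x"
  by (smt (verit, ccfv_SIG) assms(1,2,3) powr_mono' powr_neg_one)

lemma p2: fixes x a :: real assumes "1 < x" "a \<le> 1" shows "x powr (a - 1) \<le> 1"
  by (smt (verit, ccfv_threshold) assms(1,2) powr_eq_one_iff powr_less_one)

lemma inv_Gamma_bound: fixes a :: real assumes "a > 0" shows "1 / Gamma a \<le> exp 2 * a"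
proof -
  have "Gamma (a + 1) = a * Gamma a" using assms by (intro Gamma_plus1) (auto elim!: nonpos_Ints_cases)
  moreover have "exp (-2) \<le> Gamma (a + 1)" using assms by (intro Gamma_lower) simp
  moreover have "Gamma a > 0" using assms by simp
  ultimately have "exp (-2) \<le> a * Gamma a" by simp
  then have "1 \<le> exp 2 * (a * Gamma a)"
    by (smt (verit, best) exp_ge_zero exp_minus_inverse mult_left_mono)
  then show ?thesis using \<open>Gamma a > 0\<close> by (simp add: field_simps)
qed

lemma gamma_tail:
  fixes a s :: real assumes a: "0 < a" "a \<le> 1" and s: "0 < s" "s \<le> 1"
  shows "measure (gamma_measure a) {s<..} \<le> exp 2 * a * (1 - ln s)"
proof -
  define G where "G = 1 / Gamma a"
  have G0: "G > 0" using a by (simp add: G_def)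
  have "emeasure (gamma_measure a) {s<..} = (\<integral>\<^sup>+x. ennreal (gamma_density a x) * indicator {s<..} x \<partial>lborel)"
    using a by (simp add: gamma_measure_def emeasure_density)
  also have "\<dots> \<le> (\<integral>\<^sup>+x. ennreal (indicator {s..1} x * (1 / x)) * ennreal G
       + ennreal (indicator {0..} x * x powr (1 - 1) / exp x) * ennreal G \<partial>lborel)"
  proof (intro nn_integral_mono)
    fix x :: real
    have pw: "gamma_density a x * indicator {s<..} x \<le> indicator {s..1} x * (1 / x) * G
       + indicator {0..} x * x powr (1 - 1) / exp x * G"
    proof (cases "x \<le> s")
      case True then show ?thesis using s G0 by (simp add: indicator_def)
    next
      case False
      then have x: "x > s" by simp
      have gd: "gamma_density a x = x powr (a - 1) * exp (- x) * G"
        using x s by (simp add: gamma_density_def G_def)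
      show ?thesis
      proof (cases "x \<le> 1")
        case True
        have "x powr (a - 1) * exp (- x) \<le> 1 / x"
          using p1[of x a] True x s a
          by (smt (verit, ccfv_SIG) exp_ge_zero exp_le_one_iff mult_left_le mult_nonneg_nonneg powr_ge_zero)
        then have "gamma_density a x \<le> 1 / x * G" unfolding gd using G0 by (intro mult_right_mono) auto
        moreover have "0 \<le> indicator {0..} x * x powr (1 - 1) / exp x * G" using G0 by simp
        ultimately show ?thesis using True x by (simp add: indicator_def)
      next
        case False
        have "x powr (a - 1) * exp (- x) \<le> 1 / exp x"
          using p2[of x a] False a by (simp add: exp_minus inverse_eq_divide divide_right_mono)
        then have "gamma_density a x \<le> 1 / exp x * G" unfolding gd using G0 by (intro mult_right_mono) auto
        then show ?thesis using False x s by (simp add: indicator_def)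
      qed
    qed
    have e1: "ennreal (gamma_density a x) * indicator {s<..} x = ennreal (gamma_density a x * indicator {s<..} x)"
      by (simp add: indicator_def)
    have "ennreal (gamma_density a x * indicator {s<..} x) \<le> ennreal (indicator {s..1} x * (1 / x) * G
       + indicator {0..} x * x powr (1 - 1) / exp x * G)" using pw by (rule ennreal_leI)
    also have "\<dots> = ennreal (indicator {s..1} x * (1 / x)) * ennreal G
       + ennreal (indicator {0..} x * x powr (1 - 1) / exp x) * ennreal G"
      using G0 s by (intro ennreal_split) (auto simp: indicator_def)
    finally show "ennreal (gamma_density a x) * indicator {s<..} x \<le> \<dots>"
      unfolding e1 .
  qed
  also have "\<dots> = ennreal (- ln s) * ennreal G + ennreal (Gamma 1) * ennreal G"
    apply (subst nn_integral_add)
      apply measurable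
    apply (subst nn_integral_multc, measurable)
    apply (subst nn_integral_multc, measurable)
    apply (subst int_inv[OF s])
    apply (subst Gamma_conv_nn_integral_real[of 1])
    apply simp_all
    done
  also have "\<dots> = ennreal ((1 - ln s) * G)"
  proof -
    have l: "- ln s \<ge> 0" using s by simp
    have "ennreal (- ln s) * ennreal G + ennreal (Gamma 1) * ennreal G = ennreal ((- ln s) * G + 1 * G)"
      using ennreal_split[of "- ln s" 1 G] l G0 by simp
    also have "(- ln s) * G + 1 * G = (1 - ln s) * G" by (simp add: algebra_simps)
    finally show ?thesis .
  qed
  finally have em: "emeasure (gamma_measure a) {s<..} \<le> ennreal ((1 - ln s) * G)" .
  have "measure (gamma_measure a) {s<..} \<le> (1 - ln s) * G"
  proof -
    have "ln s \<le> 0" using s by simp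
    then have "0 \<le> (1 - ln s) * G" using G0 by simp
    then show ?thesis unfolding measure_def using em by (intro enn2real_leI)
  qed
  also have "\<dots> \<le> (1 - ln s) * (exp 2 * a)"
    using inv_Gamma_bound[of a] a s ln_le_minus_one[of s] unfolding G_def by (intro mult_left_mono) auto
  finally show ?thesis by (simp add: algebra_simps)
qed

lemma gamma_small:
  fixes b d :: real assumes b: "0 < b" and d: "0 < d"
  shows "measure (gamma_measure b) {..<d} \<le> exp 2 * d powr b"
proof -
  define G where "G = 1 / Gamma b"
  have G0: "G > 0" using b by (simp add: G_def)
  have "emeasure (gamma_measure b) {..<d} = (\<integral>\<^sup>+x. ennreal (gamma_density b x) * indicator {..<d} x \<partial>lborel)"
    using b by (simp add: gamma_measure_def emeasure_density)
  also have "\<dots> \<le> (\<integral>\<^sup>+x. ennreal (indicator {0<..d} x * x powr (b - 1)) * ennreal G \<partial>lborel)"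
  proof (intro nn_integral_mono)
    fix x :: real
    have pw: "gamma_density b x * indicator {..<d} x \<le> indicator {0<..d} x * x powr (b - 1) * G"
    proof (cases "0 < x \<and> x < d")
      case True
      have "x powr (b - 1) * exp (- x) \<le> x powr (b - 1)"
        using True by (intro mult_left_le) auto
      then have "gamma_density b x \<le> x powr (b - 1) * G"
        using True G0 by (simp add: gamma_density_def G_def divide_right_mono)
      then show ?thesis using True by (simp add: indicator_def)
    next
      case False
      then have "gamma_density b x * indicator {..<d} x = 0"
        by (auto simp: gamma_density_def indicator_def)
      moreover have "0 \<le> indicator {0<..d} x * x powr (b - 1) * G" using G0 by simp
      ultimately show ?thesis by linarith
    qed
    have e1: "ennreal (gamma_density b x) * indicator {..<d} x = ennreal (gamma_density b x * indicator {..<d} x)"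
      by (simp add: indicator_def)
    have "ennreal (gamma_density b x * indicator {..<d} x) \<le> ennreal (indicator {0<..d} x * x powr (b - 1) * G)"
      using pw by (rule ennreal_leI)
    also have "\<dots> = ennreal (indicator {0<..d} x * x powr (b - 1)) * ennreal G"
      using G0 by (intro ennreal_mult'') auto
    finally show "ennreal (gamma_density b x) * indicator {..<d} x \<le> \<dots>"
      unfolding e1 .
  qed
  also have "\<dots> = ennreal (d powr b / b) * ennreal G"
    apply (subst nn_integral_multc, measurable)
    apply (subst int_powr[OF b d])
    apply simp
    done
  also have "\<dots> = ennreal (d powr b / b * G)"
    using G0 b by (intro ennreal_mult''[symmetric]) auto
  finally have em: "emeasure (gamma_measure b) {..<d} \<le> ennreal (d powr b / b * G)" .
  have "measure (gamma_measure b) {..<d} \<le> d powr b / b * G"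
    unfolding measure_def using em G0 b by (intro enn2real_leI) auto
  also have "d powr b / b * G = d powr b * (1 / (b * Gamma b))" by (simp add: G_def)
  also have "b * Gamma b = Gamma (b + 1)" using b by (intro Gamma_plus1[symmetric]) (auto elim!: nonpos_Ints_cases)
  also have "1 / Gamma (b + 1) \<le> exp 2"
  proof -
    have g: "exp (-2) \<le> Gamma (b + 1)" using b by (intro Gamma_lower) simp
    have "1 / Gamma (b + 1) \<le> 1 / exp (-2)" using g by (intro divide_left_mono) (auto intro!: mult_pos_pos less_le_trans[OF exp_gt_zero g])
    then show ?thesis by (simp add: exp_minus divide_inverse)
  qed
  then have "d powr b * (1 / Gamma (b + 1)) \<le> d powr b * exp 2" by (intro mult_left_mono) auto
  finally show ?thesis by (simp add: mult.commute)
qed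

lemma gamma_neg: "a \<ge> 0 \<Longrightarrow> emeasure (gamma_measure a) {..<0} = 0"
proof (cases "a = 0")
  case True then show ?thesis by (simp add: gamma_measure_def)
next
  case False
  have "(\<integral>\<^sup>+x. ennreal (gamma_density a x) * indicator {..<0} x \<partial>lborel) = (\<integral>\<^sup>+(x::real). 0 \<partial>lborel)"
    by (rule nn_integral_cong) (auto simp: gamma_density_def indicator_def)
  then show ?thesis using False by (simp add: gamma_measure_def emeasure_density)
qed

lemma gamma_tail':
  fixes a s :: real assumes a: "0 \<le> a" "a \<le> 1" and s: "0 < s" "s \<le> 1"
  shows "measure (gamma_measure a) {s<..} \<le> exp 2 * a * (1 - ln s)"
proof (cases "a = 0")
  case True then show ?thesis using s by (simp add: gamma_measure_def measure_return)
next
  case False then show ?thesis using gamma_tail[of a s] a s by simp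
qed

lemma PiM_comp_measure:
  assumes "\<And>i. i \<in> I \<Longrightarrow> prob_space (M i)" "i \<in> I" "A \<in> sets (M i)"
  shows "measure (PiM I M) {y \<in> space (PiM I M). y i \<in> A} = measure (M i) A"
proof -
  have "measure (PiM I M) {y \<in> space (PiM I M). y i \<in> A} = measure (distr (PiM I M) (M i) (\<lambda>y. y i)) A"
    using assms by (subst measure_distr) (auto intro!: arg_cong2[where f=measure])
  also have "\<dots> = measure (M i) A" using assms by (subst distr_PiM_component) auto
  finally show ?thesis .
qed

lemma sum2: "(\<Sum>j<2::nat. y j) = (y 0 + y 1 :: real)"
  by (simp add: numeral_2_eq_2)

lemma dir2_tail:
  fixes \<alpha> :: "nat \<Rightarrow> real"
  assumes a0: "0 \<le> \<alpha> 0" "\<alpha> 0 \<le> 1" and a1: "0 < \<alpha> 1" and t: "0 < t" and dl: "0 < dl" "dl \<le> 1"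
    and td: "t * dl \<le> 1"
  shows "measure (dirichlet 2 \<alpha>) {v \<in> space (PiM {..<2} (\<lambda>_. borel)). t < v 0}
     \<le> exp 2 * \<alpha> 0 * (1 - ln (t * dl)) + exp 2 * dl powr (\<alpha> 1)"
proof -
  define P where "P = PiM {..<2::nat} (\<lambda>i. gamma_measure (\<alpha> i))"
  have pr: "\<And>i. i \<in> {..<2::nat} \<Longrightarrow> prob_space (gamma_measure (\<alpha> i))"
    using a0 a1 by (auto intro!: gamma_prob simp: less_2_cases_iff)
  interpret P: prob_space P unfolding P_def using pr by (intro prob_space_PiM) auto
  define g where "g = (\<lambda>y::nat\<Rightarrow>real. \<lambda>i\<in>{..<2::nat}. y i / (\<Sum>j<2. y j))"
  have gm: "g \<in> P \<rightarrow>\<^sub>M PiM {..<2} (\<lambda>_. borel)"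
    unfolding g_def P_def by measurable
  have "measure (dirichlet 2 \<alpha>) {v \<in> space (PiM {..<2} (\<lambda>_. borel)). t < v 0}
      = measure P (g -` {v \<in> space (PiM {..<2} (\<lambda>_. borel)). t < v 0} \<inter> space P)"
    unfolding dirichlet_def P_def[symmetric] g_def[symmetric] using gm
    by (subst measure_distr) auto
  also have "\<dots> \<le> measure P ({y \<in> space P. y 0 \<in> {t * dl<..}} \<union> {y \<in> space P. y 1 \<in> {..<dl}}
       \<union> {y \<in> space P. y 0 \<in> {..<0}})"
  proof (rule P.finite_measure_mono)
    show "g -` {v \<in> space (PiM {..<2} (\<lambda>_. borel)). t < v 0} \<inter> space P
      \<subseteq> {y \<in> space P. y 0 \<in> {t * dl<..}} \<union> {y \<in> space P. y 1 \<in> {..<dl}} \<union> {y \<in> space P. y 0 \<in> {..<0}}"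
    proof (intro subsetI)
      fix y assume yy: "y \<in> g -` {v \<in> space (PiM {..<2} (\<lambda>_. borel)). t < v 0} \<inter> space P"
      show "y \<in> {y \<in> space P. y 0 \<in> {t * dl<..}} \<union> {y \<in> space P. y 1 \<in> {..<dl}} \<union> {y \<in> space P. y 0 \<in> {..<0}}"
      proof (rule ccontr)
      assume nn: "\<not> ?thesis"
      have y: "t < g y 0" using yy by auto
      have y0: "0 \<le> y 0" "y 0 \<le> t * dl" and y1: "dl \<le> y 1" using yy nn by auto
      have "g y 0 = y 0 / (y 0 + y 1)" by (simp add: g_def sum2)
      also have "\<dots> \<le> y 0 / y 1" using y0 y1 dl by (intro divide_left_mono) auto
      also have "\<dots> \<le> t * dl / dl" using y0 y1 dl by (intro frac_le) auto
      also have "\<dots> = t" using dl by simp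
      finally show False using y by simp
    qed
    qed
  qed (unfold P_def, measurable)
  also have "\<dots> \<le> measure P {y \<in> space P. y 0 \<in> {t * dl<..}} + measure P {y \<in> space P. y 1 \<in> {..<dl}}
       + measure P {y \<in> space P. y 0 \<in> {..<0}}"
    by (intro order_trans[OF measure_Un_le] add_mono order_refl measure_Un_le)
       (unfold P_def, measurable)
  also have "\<dots> = measure (gamma_measure (\<alpha> 0)) {t * dl<..} + measure (gamma_measure (\<alpha> 1)) {..<dl}
       + measure (gamma_measure (\<alpha> 0)) {..<0}"
  proof -
    have c1: "measure P {y\<in>space P. y 0 \<in> {t*dl<..}} = measure (gamma_measure (\<alpha> 0)) {t*dl<..}"
      unfolding P_def by (rule PiM_comp_measure) (use pr in auto)
    have c2: "measure P {y\<in>space P. y 1 \<in> {..<dl}} = measure (gamma_measure (\<alpha> 1)) {..<dl}"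
      unfolding P_def by (rule PiM_comp_measure) (use pr in auto)
    have c3: "measure P {y\<in>space P. y 0 \<in> {..<0}} = measure (gamma_measure (\<alpha> 0)) {..<0}"
      unfolding P_def by (rule PiM_comp_measure) (use pr in auto)
    show ?thesis by (simp only: c1 c2 c3)
  qed
  also have "measure (gamma_measure (\<alpha> 0)) {..<0} = 0"
    using gamma_neg[OF a0(1)] by (simp add: measure_def)
  also have "measure (gamma_measure (\<alpha> 0)) {t * dl<..} \<le> exp 2 * \<alpha> 0 * (1 - ln (t * dl))"
    using a0 t dl td by (intro gamma_tail') auto
  also have "measure (gamma_measure (\<alpha> 1)) {..<dl} \<le> exp 2 * dl powr (\<alpha> 1)"
    using a1 dl by (intro gamma_small) auto
  finally show ?thesis by simp
qed

lemma dp_prob: "is_dirichlet_process N c \<rho> D \<Longrightarrow> prob_space N"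
  by (simp add: is_dirichlet_process_def)

lemma dp_meas: "is_dirichlet_process N c \<rho> D \<Longrightarrow> D \<in> N \<rightarrow>\<^sub>M prob_algebra borel"
  by (simp add: is_dirichlet_process_def)

lemma dp_pt: assumes "is_dirichlet_process N c \<rho> D" "\<omega> \<in> space N"
  shows "prob_space (D \<omega>)" "sets (D \<omega>) = sets borel" "space (D \<omega>) = UNIV"
proof -
  have "D \<omega> \<in> space (prob_algebra borel)"
    using measurable_space[OF dp_meas[OF assms(1)] assms(2)] .
  then show "prob_space (D \<omega>)" "sets (D \<omega>) = sets borel"
    by (auto simp: space_prob_algebra)
  then show "space (D \<omega>) = UNIV" using sets_eq_imp_space_eq by fastforce
qed

lemma dp_marg:
  assumes dp: "is_dirichlet_process N c \<rho> D" and k: "k \<ge> 1"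
    and A: "\<And>i. i < k \<Longrightarrow> A i \<in> sets borel" "disjoint_family_on A {..<k}" "(\<Union>i<k. A i) = UNIV"
    and V: "V \<in> sets (PiM {..<k} (\<lambda>_. borel :: real measure))"
  shows "measure N {\<omega> \<in> space N. (\<lambda>i\<in>{..<k}. measure (D \<omega>) (A i)) \<in> V}
       = measure (dirichlet k (\<lambda>i. c * measure \<rho> (A i))) V"
proof -
  have Dm[measurable]: "D \<in> N \<rightarrow>\<^sub>M prob_algebra borel" using dp_meas[OF dp] .
  have Am[measurable]: "A i \<in> sets borel" if "i \<in> {..<k}" for i using A(1) that by auto
  have mm: "(\<lambda>\<omega>. \<lambda>i\<in>{..<k}. measure (D \<omega>) (A i)) \<in> N \<rightarrow>\<^sub>M PiM {..<k} (\<lambda>_. borel)"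
    by (intro measurable_restrict measurable_compose[OF Dm measurable_measure_prob_algebra] Am)
  have eq: "distr N (PiM {..<k} (\<lambda>_. borel)) (\<lambda>\<omega>. \<lambda>i\<in>{..<k}. measure (D \<omega>) (A i))
          = dirichlet k (\<lambda>i. c * measure \<rho> (A i))"
    using dp k A unfolding is_dirichlet_process_def by blast
  have "measure N {\<omega> \<in> space N. (\<lambda>i\<in>{..<k}. measure (D \<omega>) (A i)) \<in> V}
      = measure (distr N (PiM {..<k} (\<lambda>_. borel)) (\<lambda>\<omega>. \<lambda>i\<in>{..<k}. measure (D \<omega>) (A i))) V"
    using mm V by (subst measure_distr) (auto intro!: arg_cong2[where f=measure])
  then show ?thesis unfolding eq .
qed

definition part2 :: "real set \<Rightarrow> nat \<Rightarrow> real set" where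
  "part2 A = (\<lambda>i. if i = 0 then A else - A)"

lemma dp_marg2:
  assumes dp: "is_dirichlet_process N c \<rho> D" and A: "A \<in> sets borel"
    and V: "V \<in> sets (PiM {..<2} (\<lambda>_. borel :: real measure))"
  shows "measure N {\<omega> \<in> space N. (\<lambda>i\<in>{..<2}. measure (D \<omega>) (part2 A i)) \<in> V}
       = measure (dirichlet 2 (\<lambda>i. c * measure \<rho> (part2 A i))) V"
proof (rule dp_marg[OF dp _ _ _ _ V])
  show "disjoint_family_on (part2 A) {..<2}"
    by (auto simp: disjoint_family_on_def part2_def)
  show "(\<Union>i<2. part2 A i) = UNIV"
    by (auto simp: part2_def lessThan_nat_numeral)
qed (use A in \<open>auto simp: part2_def\<close>)

lemma dp_tail:
  assumes dp: "is_dirichlet_process N c \<rho> D" and A: "A \<in> sets borel"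
    and rho: "prob_space \<rho>" "sets \<rho> = sets borel"
    and c: "c > 0" and a1: "c * measure \<rho> A \<le> 1" and r1: "measure \<rho> A < 1"
    and t: "0 < t" and dl: "0 < dl" "dl \<le> 1" and td: "t * dl \<le> 1"
  shows "measure N {\<omega> \<in> space N. t < measure (D \<omega>) A}
     \<le> exp 2 * (c * measure \<rho> A) * (1 - ln (t * dl)) + exp 2 * dl powr (c * (1 - measure \<rho> A))"
proof -
  interpret r: prob_space \<rho> by fact
  have sp: "space \<rho> = UNIV" using rho(2) sets_eq_imp_space_eq by fastforce
  have cA: "measure \<rho> (- A) = 1 - measure \<rho> A"
    using r.prob_compl[of A] A rho(2) sp by (simp add: Compl_eq_Diff_UNIV)
  then have al: "(\<lambda>i. c * measure \<rho> (part2 A i)) 1 = c * (1 - measure \<rho> A)"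
    by (simp add: part2_def)
  have V: "{v \<in> space (PiM {..<2::nat} (\<lambda>_. borel :: real measure)). t < v 0} \<in> sets (PiM {..<2::nat} (\<lambda>_. borel :: real measure))"
    by measurable
  have "{\<omega> \<in> space N. t < measure (D \<omega>) A} = {\<omega> \<in> space N. (\<lambda>i\<in>{..<2}. measure (D \<omega>) (part2 A i)) \<in> {v \<in> space (PiM {..<2::nat} (\<lambda>_. borel :: real measure)). t < v 0}}"
    by (auto simp: part2_def space_PiM PiE_def extensional_def)
  then have "measure N {\<omega> \<in> space N. t < measure (D \<omega>) A}
     = measure (dirichlet 2 (\<lambda>i. c * measure \<rho> (part2 A i))) {v \<in> space (PiM {..<2::nat} (\<lambda>_. borel :: real measure)). t < v 0}"
    using dp_marg2[OF dp A V] by simp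
  also have "\<dots> \<le> exp 2 * (\<lambda>i. c * measure \<rho> (part2 A i)) 0 * (1 - ln (t * dl))
     + exp 2 * dl powr ((\<lambda>i. c * measure \<rho> (part2 A i)) 1)"
    by (rule dir2_tail) (use c a1 r1 t dl td in \<open>auto simp: part2_def al cA\<close>)
  finally show ?thesis by (simp add: al part2_def cA)
qed

lemma dir2_zero:
  fixes \<alpha> :: "nat \<Rightarrow> real"
  assumes a0: "\<alpha> 0 = 0" and a1: "0 \<le> \<alpha> 1"
  shows "measure (dirichlet 2 \<alpha>) {v \<in> space (PiM {..<2::nat} (\<lambda>_. borel)). 0 < v 0} = 0"
proof -
  define P where "P = PiM {..<2::nat} (\<lambda>i. gamma_measure (\<alpha> i))"
  have pr: "\<And>i. i \<in> {..<2::nat} \<Longrightarrow> prob_space (gamma_measure (\<alpha> i))"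
    using a0 a1 by (auto intro!: gamma_prob simp: less_2_cases_iff)
  interpret P: prob_space P unfolding P_def using pr by (intro prob_space_PiM) auto
  define g where "g = (\<lambda>y::nat\<Rightarrow>real. \<lambda>i\<in>{..<2::nat}. y i / (\<Sum>j<2. y j))"
  have gm: "g \<in> P \<rightarrow>\<^sub>M PiM {..<2} (\<lambda>_. borel)"
    unfolding g_def P_def by measurable
  have "measure (dirichlet 2 \<alpha>) {v \<in> space (PiM {..<2::nat} (\<lambda>_. borel)). 0 < v 0}
      = measure P (g -` {v \<in> space (PiM {..<2::nat} (\<lambda>_. borel)). 0 < v 0} \<inter> space P)"
    unfolding dirichlet_def P_def[symmetric] g_def[symmetric] using gm
    by (subst measure_distr) auto
  also have "\<dots> \<le> measure P {y \<in> space P. y 0 \<in> - {0}}"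
    by (rule P.finite_measure_mono) (auto simp: g_def, unfold P_def, measurable)
  also have "\<dots> = measure (gamma_measure (\<alpha> 0)) (- {0})"
    unfolding P_def by (rule PiM_comp_measure) (use pr in auto)
  also have "\<dots> = 0" using a0 by (simp add: gamma_measure_def measure_return)
  finally show ?thesis by (simp add: measure_le_0_iff)
qed

lemma dp_null:
  assumes dp: "is_dirichlet_process N c \<rho> D" and A: "A \<in> sets borel"
    and rho: "prob_space \<rho>" "sets \<rho> = sets borel" and c: "c > 0" and r0: "measure \<rho> A = 0"
  shows "AE \<omega> in N. measure (D \<omega>) A = 0"
proof -
  interpret r: prob_space \<rho> by fact
  interpret N: prob_space N using dp_prob[OF dp] .
  have sp: "space \<rho> = UNIV" using rho(2) sets_eq_imp_space_eq by fastforce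
  have cA: "measure \<rho> (- A) = 1 - measure \<rho> A"
    using r.prob_compl[of A] A rho(2) sp by (simp add: Compl_eq_Diff_UNIV)
  have V: "{v \<in> space (PiM {..<2::nat} (\<lambda>_. borel :: real measure)). 0 < v 0} \<in> sets (PiM {..<2::nat} (\<lambda>_. borel :: real measure))"
    by measurable
  have Dm[measurable]: "D \<in> N \<rightarrow>\<^sub>M prob_algebra borel" using dp_meas[OF dp] .
  have Am[measurable]: "A \<in> sets borel" by fact
  have "{\<omega> \<in> space N. 0 < measure (D \<omega>) A} = {\<omega> \<in> space N. (\<lambda>i\<in>{..<2}. measure (D \<omega>) (part2 A i)) \<in> {v \<in> space (PiM {..<2::nat} (\<lambda>_. borel :: real measure)). 0 < v 0}}"
    by (auto simp: part2_def space_PiM PiE_def extensional_def)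
  then have "measure N {\<omega> \<in> space N. 0 < measure (D \<omega>) A}
     = measure (dirichlet 2 (\<lambda>i. c * measure \<rho> (part2 A i))) {v \<in> space (PiM {..<2::nat} (\<lambda>_. borel :: real measure)). 0 < v 0}"
    using dp_marg2[OF dp A V] by simp
  also have "\<dots> = 0" by (rule dir2_zero) (use c r0 cA in \<open>auto simp: part2_def\<close>)
  finally have m0: "measure N {\<omega> \<in> space N. 0 < measure (D \<omega>) A} = 0" .
  have S: "{\<omega> \<in> space N. 0 < measure (D \<omega>) A} \<in> sets N" by measurable
  have "{\<omega> \<in> space N. 0 < measure (D \<omega>) A} \<in> null_sets N"
    using m0 S by (intro null_setsI) (simp add: N.emeasure_eq_measure)
  from AE_not_in[OF this] AE_space show ?thesis
    by eventually_elim (auto simp: not_less intro: antisym)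
qed

definition shell :: "nat \<Rightarrow> real set" where
  "shell n = {x. 2^n \<le> \<bar>x\<bar> \<and> \<bar>x\<bar> < 2^(Suc n)}"

lemma shell_sets[measurable]: "shell n \<in> sets borel"
proof -
  have "shell n = {x \<in> space borel. 2^n \<le> \<bar>x\<bar> \<and> \<bar>x\<bar> < 2^(Suc n)}" by (simp add: shell_def)
  also have "\<dots> \<in> sets borel" by measurable
  finally show ?thesis .
qed

lemma shell_ex: fixes x :: real assumes "\<bar>x\<bar> \<ge> 1" shows "\<exists>n. x \<in> shell n"
proof -
  define k where "k = \<lfloor>log 2 \<bar>x\<bar>\<rfloor>"
  have "log 2 \<bar>x\<bar> \<ge> 0" using assms by simp
  then have k0: "k \<ge> 0" by (simp add: k_def)
  have "2 powr (real_of_int k) \<le> \<bar>x\<bar> \<and> \<bar>x\<bar> < 2 powr (real_of_int k + 1)"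
    using floor_log_eq_powr_iff[of "\<bar>x\<bar>" 2 k] assms by (simp add: k_def)
  moreover have "real_of_int k = real (nat k)" using k0 by simp
  moreover have "(2::real) powr (real (nat k)) = 2 ^ nat k" by (rule powr_realpow) simp
  moreover have "(2::real) powr (real (Suc (nat k))) = 2 ^ Suc (nat k)" by (rule powr_realpow) simp
  moreover have "real_of_int k + 1 = real (Suc (nat k))" using k0 by simp
  ultimately have "2 ^ nat k \<le> \<bar>x\<bar> \<and> \<bar>x\<bar> < 2 ^ Suc (nat k)"
    by metis
  then show ?thesis by (auto simp: shell_def)
qed

lemma shell_disj: "x \<in> shell m \<Longrightarrow> x \<in> shell n \<Longrightarrow> m = n"
proof -
  assume a: "x \<in> shell m" "x \<in> shell n"
  have "(2::real)^m < 2^Suc n" "(2::real)^n < 2^Suc m" using a by (auto simp: shell_def)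
  then have "m < Suc n" "n < Suc m" by (simp_all only: power_strict_increasing_iff[of "2::real"])
  then show "m = n" by simp
qed

lemma shell_log: assumes "x \<in> shell n" shows "real n \<le> ln (1 + x\<^sup>2)"
proof -
  have "(2::real)^n \<le> \<bar>x\<bar>" using assms by (simp add: shell_def)
  then have "((2::real)^n)^2 \<le> \<bar>x\<bar>^2" by (intro power_mono) auto
  moreover have "(4::real)^n = ((2::real)^n)^2"
  proof -
    have "(4::real)^n = (2^2)^n" by simp
    also have "\<dots> = (2^n)^2" by (simp only: power_mult[symmetric] mult.commute)
    finally show ?thesis .
  qed
  ultimately have "(4::real)^n \<le> x\<^sup>2" by simp
  moreover have "0 < 1 + x\<^sup>2" by (simp add: add_pos_nonneg)
  ultimately have "ln ((4::real)^n) \<le> ln (1 + x\<^sup>2)" by (subst ln_le_cancel_iff) auto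
  moreover have "ln ((4::real)^n) = real n * ln 4" by (simp add: ln_realpow)
  moreover have "ln (4::real) \<ge> 1"
  proof -
    have "exp 1 \<le> (4::real)" using exp_le by simp
    then show ?thesis by (metis exp_gt_zero ln_exp ln_le_cancel_iff zero_less_numeral)
  qed
  moreover have "real n * 1 \<le> real n * ln 4" using \<open>ln 4 \<ge> 1\<close> by (intro mult_left_mono) auto
  ultimately show ?thesis by linarith
qed

lemma suminf_single_ennreal:
  fixes f :: "nat \<Rightarrow> ennreal"
  assumes "\<And>m. m \<noteq> n \<Longrightarrow> f m = 0" shows "(\<Sum>m. f m) = f n"
proof -
  have "f = (\<lambda>r. if r = n then f r else 0)" using assms by auto
  then have "f sums f n" using sums_single[of n f] by simp
  then show ?thesis by (rule sums_unique[symmetric])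
qed

lemma shells_sum_log: "(\<Sum>n. ennreal (real n * indicator (shell n) x)) \<le> ennreal (ln (1 + x\<^sup>2))"
proof (cases "\<exists>n. x \<in> shell n")
  case True
  then obtain n where n: "x \<in> shell n" by blast
  have "(\<Sum>m. ennreal (real m * indicator (shell m) x)) = ennreal (real n * indicator (shell n) x)"
    by (rule suminf_single_ennreal) (use n shell_disj in \<open>auto simp: indicator_def\<close>)
  also have "\<dots> \<le> ennreal (ln (1 + x\<^sup>2))" using n shell_log[OF n] by (intro ennreal_leI) simp
  finally show ?thesis .
next
  case False then show ?thesis by (simp add: indicator_def)
qed

lemma shells_sum_abs: "ennreal \<bar>x\<bar> \<le> 1 + (\<Sum>n. ennreal (2^Suc n * indicator (shell n) x))"
proof (cases "\<bar>x\<bar> \<ge> 1")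
  case True
  then obtain n where n: "x \<in> shell n" using shell_ex by blast
  have "(\<Sum>m. ennreal (2^Suc m * indicator (shell m) x)) = ennreal (2^Suc n * indicator (shell n) x)"
    by (rule suminf_single_ennreal) (use n shell_disj in \<open>auto simp: indicator_def\<close>)
  moreover have "ennreal \<bar>x\<bar> \<le> ennreal (2^Suc n * indicator (shell n) x)"
    using n by (intro ennreal_leI) (auto simp: shell_def)
  ultimately show ?thesis by (simp add: add_increasing)
next
  case False
  then have "ennreal \<bar>x\<bar> \<le> ennreal 1" by (intro ennreal_leI) simp
  then show ?thesis by (simp add: add_increasing2)
qed

lemma pow_aux: "(2::real)^Suc n * (1/4)^n = 2 * (1/2)^n"
proof -
  have "(2::real)^Suc n * (1/4)^n = 2 * (2^n * (1/4)^n)" by simp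
  also have "2^n * (1/4::real)^n = (2 * (1/4))^n" by (rule power_mult_distrib[symmetric])
  finally show ?thesis by simp
qed
lemma powr_pow_swap: fixes x r :: real assumes "x > 0" shows "(x^n) powr r = (x powr r)^n"
  using assms by (simp add: powr_realpow[symmetric] powr_powr mult.commute)
lemma ln_aux: "ln ((1/4::real)^n * (1/2)^n) = - (real n * ln 8)"
proof -
  have "(1/4::real)^n * (1/2)^n = (1/8)^n" by (simp add: power_mult_distrib[symmetric])
  moreover have "ln ((1/8::real)^n) = real n * ln (1/8)" by (simp add: ln_realpow)
  moreover have "ln (1/8::real) = - ln 8" by (simp add: ln_div)
  ultimately show ?thesis by simp
qed

lemma shell_int:
  assumes pr: "prob_space M" and sM: "sets M = sets borel"
    and ev: "eventually (\<lambda>n. measure M (shell n) \<le> (1/4)^n) sequentially"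
  shows "integrable M (\<lambda>x::real. x)"
proof -
  interpret M: prob_space M by fact
  have meas[measurable]: "(\<lambda>x::real. x) \<in> borel_measurable M"
    by (rule measurable_ident_sets[OF sM])
  have sh[measurable]: "shell n \<in> sets M" for n using sM by simp
  have sm: "summable (\<lambda>n. 2^Suc n * measure M (shell n))"
  proof (rule summable_comparison_test_ev)
    show "eventually (\<lambda>n. norm (2^Suc n * measure M (shell n)) \<le> 2 * (1/2::real)^n) sequentially"
      using ev
    proof eventually_elim
      case (elim n)
      have "2^Suc n * measure M (shell n) \<le> (2::real)^Suc n * (1/4)^n"
        using elim by (intro mult_left_mono) auto
      moreover have "norm (2^Suc n * measure M (shell n)) = (2::real)^Suc n * measure M (shell n)"
        by simp
      ultimately show ?case using pow_aux[of n] by linarith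
    qed
    show "summable (\<lambda>n. 2 * (1/2::real)^n)" by (intro summable_mult summable_geometric) simp
  qed
  have "(\<integral>\<^sup>+x. ennreal (norm x) \<partial>M) \<le> (\<integral>\<^sup>+x. 1 + (\<Sum>n. ennreal (2^Suc n * indicator (shell n) x)) \<partial>M)"
    by (intro nn_integral_mono) (use shells_sum_abs in \<open>simp only: real_norm_def\<close>)
  also have "\<dots> = 1 + (\<Sum>n. \<integral>\<^sup>+x. ennreal (2^Suc n * indicator (shell n) x) \<partial>M)"
    apply (subst nn_integral_add)
      apply measurable
    apply (subst nn_integral_suminf)
     apply measurable
    apply (simp add: M.emeasure_space_1)
    done
  also have "(\<lambda>n. \<integral>\<^sup>+x. ennreal (2^Suc n * indicator (shell n) x) \<partial>M) = (\<lambda>n. ennreal (2^Suc n * measure M (shell n)))"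
  proof
    fix n
    have "(\<integral>\<^sup>+x. ennreal (2^Suc n * indicator (shell n) x) \<partial>M) = (\<integral>\<^sup>+x. ennreal (2^Suc n) * indicator (shell n) x \<partial>M)"
      by (intro nn_integral_cong) (simp add: indicator_def)
    also have "\<dots> = ennreal (2^Suc n) * emeasure M (shell n)" by (simp add: nn_integral_cmult_indicator)
    also have "\<dots> = ennreal (2^Suc n * measure M (shell n))"
      by (subst ennreal_mult) (auto simp: M.emeasure_eq_measure)
    finally show "(\<integral>\<^sup>+x. ennreal (2^Suc n * indicator (shell n) x) \<partial>M) = ennreal (2^Suc n * measure M (shell n))" .
  qed
  also have "(\<Sum>n. ennreal (2^Suc n * measure M (shell n))) = ennreal (\<Sum>n. 2^Suc n * measure M (shell n))"
    using sm by (intro suminf_ennreal2) auto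
  finally have le: "(\<integral>\<^sup>+x. ennreal (norm x) \<partial>M) \<le> 1 + ennreal (\<Sum>n. 2^Suc n * measure M (shell n))" .
  have "1 + ennreal (\<Sum>n. 2^Suc n * measure M (shell n)) < \<infinity>" by simp
  with le have "(\<integral>\<^sup>+x. ennreal (norm x) \<partial>M) < \<infinity>" by (rule le_less_trans)
  then show ?thesis using meas by (simp add: integrable_iff_bounded)
qed

lemma dp_integrable:
  assumes dp: "is_dirichlet_process N c \<rho> D"
    and rho: "prob_space \<rho>" "sets \<rho> = sets borel"
    and log: "(\<integral>\<^sup>+x. ennreal (ln (1 + x\<^sup>2)) \<partial>\<rho>) < \<infinity>"
    and c: "c > 0"
  shows "AE \<omega> in N. integrable (D \<omega>) (\<lambda>x. x)"
proof -
  interpret r: prob_space \<rho> by fact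
  interpret N: prob_space N using dp_prob[OF dp] .
  have Dm[measurable]: "D \<in> N \<rightarrow>\<^sub>M prob_algebra borel" using dp_meas[OF dp] .
  define p where "p n = measure \<rho> (shell n)" for n
  have p_nn: "p n \<ge> 0" for n by (simp add: p_def)
  have idm[measurable]: "(\<lambda>x::real. x) \<in> borel_measurable \<rho>" by (rule measurable_ident_sets[OF rho(2)])
  have shr[measurable]: "shell n \<in> sets \<rho>" for n using rho(2) by simp
  have eq1: "(\<lambda>n. \<integral>\<^sup>+x. ennreal (real n * indicator (shell n) x) \<partial>\<rho>) = (\<lambda>n. ennreal (real n * p n))"
  proof
    fix n
    have "(\<integral>\<^sup>+x. ennreal (real n * indicator (shell n) x) \<partial>\<rho>) = (\<integral>\<^sup>+x. ennreal (real n) * indicator (shell n) x \<partial>\<rho>)"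
      by (intro nn_integral_cong) (simp add: indicator_def)
    also have "\<dots> = ennreal (real n) * emeasure \<rho> (shell n)" by (simp add: nn_integral_cmult_indicator)
    also have "\<dots> = ennreal (real n * p n)"
      by (subst ennreal_mult) (auto simp: r.emeasure_eq_measure p_def)
    finally show "(\<integral>\<^sup>+x. ennreal (real n * indicator (shell n) x) \<partial>\<rho>) = ennreal (real n * p n)" .
  qed
  have "(\<Sum>n. ennreal (real n * p n)) = (\<integral>\<^sup>+x. (\<Sum>n. ennreal (real n * indicator (shell n) x)) \<partial>\<rho>)"
    apply (subst nn_integral_suminf)
     apply measurable
    apply (simp only: eq1)
    done
  also have "\<dots> \<le> (\<integral>\<^sup>+x. ennreal (ln (1 + x\<^sup>2)) \<partial>\<rho>)"
    by (intro nn_integral_mono shells_sum_log)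
  also have "\<dots> < \<infinity>" by (rule log)
  finally have s1: "summable (\<lambda>n. real n * p n)"
    by (intro summable_suminf_not_top) (auto simp: p_nn)
  have s2: "summable p"
  proof (rule summable_comparison_test_ev[OF _ s1])
    show "eventually (\<lambda>n. norm (p n) \<le> real n * p n) sequentially"
      unfolding eventually_sequentially
    proof (intro exI allI impI)
      fix n :: nat assume "1 \<le> n"
      then have "1 * p n \<le> real n * p n" using p_nn by (intro mult_right_mono) auto
      then show "norm (p n) \<le> real n * p n" using p_nn[of n] by simp
    qed
  qed
  have p0: "p \<longlonglongrightarrow> 0" using summable_LIMSEQ_zero[OF s2] .
  have "eventually (\<lambda>n. p n < min (1 / c) (1 / 2)) sequentially"
    using order_tendstoD(2)[OF p0, of "min (1 / c) (1 / 2)"] c by simp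
  then have ev1: "eventually (\<lambda>n. c * p n \<le> 1 \<and> p n \<le> 1 / 2) sequentially"
  proof eventually_elim
    case (elim n)
    then have "p n < 1 / c" by simp
    then have "c * p n < 1" using c by (simp add: field_simps)
    then show ?case using elim by simp
  qed
  define q where "q = (1/2::real) powr (c / 2)"
  have q: "0 < q" "q < 1" using c by (auto simp: q_def powr01_less_one)
  define E where "E n = {\<omega> \<in> space N. (1/4)^n < measure (D \<omega>) (shell n)}" for n
  have Em[measurable]: "E n \<in> sets N" for n unfolding E_def by measurable
  have bnd: "eventually (\<lambda>n. measure N (E n) \<le> exp 2 * c * p n + exp 2 * c * ln 8 * (real n * p n) + exp 2 * q^n) sequentially"
    using ev1
  proof eventually_elim
    case (elim n)
    have "measure N (E n) \<le> exp 2 * (c * p n) * (1 - ln ((1/4)^n * (1/2)^n)) + exp 2 * ((1/2)^n) powr (c * (1 - p n))"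
      unfolding E_def p_def
    proof (rule dp_tail[OF dp shell_sets rho c])
      show "c * measure \<rho> (shell n) \<le> 1" using elim by (simp add: p_def)
      show "measure \<rho> (shell n) < 1" using elim by (simp add: p_def)
      show "(1/4::real)^n * (1/2)^n \<le> 1" by (intro mult_le_one) (auto simp: power_le_one)
    qed (auto simp: power_le_one)
    also have "1 - ln ((1/4::real)^n * (1/2)^n) = 1 + real n * ln 8" by (simp add: ln_aux)
    also have "((1/2::real)^n) powr (c * (1 - p n)) \<le> ((1/2)^n) powr (c / 2)"
      using elim c by (intro powr_mono') (auto simp: power_le_one field_simps)
    also have "((1/2::real)^n) powr (c / 2) = q^n" by (simp add: q_def powr_pow_swap)
    finally show ?case by (simp add: algebra_simps)
  qed
  have s3: "summable (\<lambda>n. measure N (E n))"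
  proof (rule summable_comparison_test_ev)
    show "eventually (\<lambda>n. norm (measure N (E n)) \<le> exp 2 * c * p n + exp 2 * c * ln 8 * (real n * p n) + exp 2 * q^n) sequentially"
      using bnd by eventually_elim simp
    show "summable (\<lambda>n. exp 2 * c * p n + exp 2 * c * ln 8 * (real n * p n) + exp 2 * q^n)"
      using s1 s2 q by (intro summable_add summable_mult summable_geometric) auto
  qed
  have "AE \<omega> in N. eventually (\<lambda>n. \<omega> \<in> space N - E n) sequentially"
    by (rule borel_cantelli_AE1[OF Em _ s3]) (simp add: N.emeasure_eq_measure)
  with AE_space show ?thesis
  proof eventually_elim
    case (elim \<omega>)
    have "eventually (\<lambda>n. measure (D \<omega>) (shell n) \<le> (1/4)^n) sequentially"
      using elim(2) by eventually_elim (use elim(1) in \<open>auto simp: E_def not_less\<close>)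
    then show ?case using dp_pt[OF dp elim(1)] by (intro shell_int) auto
  qed
qed

definition clampM :: "real \<Rightarrow> real \<Rightarrow> real" where
  "clampM M x = max (- M) (min M x)"

definition idx :: "real \<Rightarrow> nat \<Rightarrow> real \<Rightarrow> nat" where
  "idx M K x = min (K - 1) (nat \<lfloor>(clampM M x + M) / (2 * M / real K)\<rfloor>)"

definition cell :: "real \<Rightarrow> nat \<Rightarrow> nat \<Rightarrow> real set" where
  "cell M K j = {x. idx M K x = j}"

definition stepv :: "real \<Rightarrow> nat \<Rightarrow> nat \<Rightarrow> real" where
  "stepv M K j = - M + real j * (2 * M / real K)"

definition gsum :: "real \<Rightarrow> nat \<Rightarrow> (nat \<Rightarrow> real) \<Rightarrow> real" where
  "gsum M K v = (\<Sum>j<K. stepv M K j * v j)"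

lemma clampM_meas[measurable]: "clampM M \<in> borel_measurable borel"
  unfolding clampM_def by measurable

lemma idx_meas[measurable]: "idx M K \<in> borel \<rightarrow>\<^sub>M count_space UNIV"
  unfolding idx_def by measurable

lemma cell_sets[measurable]: "cell M K j \<in> sets borel"
proof -
  have "cell M K j = idx M K -` {j} \<inter> space borel" by (auto simp: cell_def)
  also have "\<dots> \<in> sets borel" by (rule measurable_sets[OF idx_meas]) simp
  finally show ?thesis .
qed

lemma clampM_idem: "M \<ge> 0 \<Longrightarrow> clampM M (clampM M x) = clampM M x"
  by (simp add: clampM_def)

lemma clampM_range: "M \<ge> 0 \<Longrightarrow> - M \<le> clampM M x \<and> clampM M x \<le> M"
  by (simp add: clampM_def)

lemma idx_clamp: "M \<ge> 0 \<Longrightarrow> idx M K (clampM M x) = idx M K x"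
  by (simp add: idx_def clampM_idem)

lemma idx_less: "K \<ge> 1 \<Longrightarrow> idx M K x < K"
  by (simp add: idx_def)

lemma step_approx:
  assumes M: "M > 0" and K: "K \<ge> 1"
  shows "\<bar>stepv M K (idx M K x) - clampM M x\<bar> \<le> 2 * M / real K"
proof -
  define h where "h = 2 * M / real K"
  have h: "h > 0" using M K by (simp add: h_def)
  define y where "y = clampM M x"
  have y: "- M \<le> y" "y \<le> M" using clampM_range[of M x] M by (auto simp: y_def)
  define u where "u = (y + M) / h"
  have u0: "0 \<le> u" using y h by (simp add: u_def)
  have uK: "u \<le> real K"
  proof -
    have "y + M \<le> 2 * M" using y by simp
    also have "2 * M = real K * h" using K by (simp add: h_def)
    finally show ?thesis using h by (simp add: u_def pos_divide_le_eq mult.commute)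
  qed
  have sv: "stepv M K j = - M + real j * h" for j by (simp add: stepv_def h_def)
  have yu: "y = - M + u * h" using h by (simp add: u_def)
  define f where "f = nat \<lfloor>u\<rfloor>"
  have f1: "real f \<le> u" "u < real f + 1" using u0 by (auto simp: f_def)
  have idxe: "idx M K x = min (K - 1) f" by (simp add: idx_def f_def u_def y_def h_def)
  show ?thesis
  proof (cases "f \<le> K - 1")
    case True
    then have "idx M K x = f" using idxe by simp
    then have "stepv M K (idx M K x) - clampM M x = - ((u - real f) * h)"
      by (simp add: sv yu y_def[symmetric] algebra_simps)
    moreover have "0 \<le> (u - real f) * h" "(u - real f) * h \<le> h"
      using f1 h by (auto intro: mult_left_le_one_le)
    ultimately show ?thesis by (simp add: h_def[symmetric])
  next
    case False
    then have fK: "f \<ge> K" by simp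
    then have "u = real K" using f1 uK by linarith
    moreover have "idx M K x = K - 1" using idxe fK by simp
    moreover have "real (K - 1) = real K - 1" using K by simp
    ultimately have "stepv M K (idx M K x) - clampM M x = - h"
      by (simp add: sv yu y_def[symmetric] algebra_simps)
    then show ?thesis using h by (simp add: h_def[symmetric])
  qed
qed

lemma step_sum:
  assumes K: "K \<ge> 1"
  shows "stepv M K (idx M K x) = (\<Sum>j<K. stepv M K j * indicator (cell M K j) x)"
proof -
  have "(\<Sum>j<K. stepv M K j * indicator (cell M K j) x) = (\<Sum>j\<in>{idx M K x}. stepv M K j * indicator (cell M K j) x)"
    using idx_less[OF K] by (intro sum.mono_neutral_right) (auto simp: cell_def)
  then show ?thesis by (simp add: cell_def)
qed

lemma step_meas[measurable]: "(\<lambda>x. stepv M K (idx M K x)) \<in> borel_measurable borel"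
  by measurable

lemma gsum_int:
  assumes pr: "prob_space \<mu>" and s: "sets \<mu> = sets borel" and K: "K \<ge> 1"
  shows "(\<integral>x. stepv M K (idx M K x) \<partial>\<mu>) = gsum M K (\<lambda>j. measure \<mu> (cell M K j))"
    and "integrable \<mu> (\<lambda>x. stepv M K (idx M K x))"
proof -
  interpret prob_space \<mu> by fact
  have c[measurable]: "cell M K j \<in> sets \<mu>" for j using s by simp
  have ii: "integrable \<mu> (\<lambda>x. stepv M K j * indicator (cell M K j) x)" for j
    by (intro integrable_mult_right integrable_real_indicator) (auto simp: emeasure_eq_measure)
  have eq: "(\<lambda>x. stepv M K (idx M K x)) = (\<lambda>x. \<Sum>j<K. stepv M K j * indicator (cell M K j) x)"
    using step_sum[OF K] by auto
  show "integrable \<mu> (\<lambda>x. stepv M K (idx M K x))" unfolding eq by (rule Bochner_Integration.integrable_sum, rule ii)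
  have "(\<integral>x. stepv M K (idx M K x) \<partial>\<mu>) = (\<Sum>j<K. \<integral>x. stepv M K j * indicator (cell M K j) x \<partial>\<mu>)"
    unfolding eq by (intro Bochner_Integration.integral_sum ii)
  also have "\<dots> = (\<Sum>j<K. stepv M K j * measure \<mu> (cell M K j))"
  proof (intro sum.cong refl)
    fix j
    have "(\<integral>x. stepv M K j * indicator (cell M K j) x \<partial>\<mu>) = stepv M K j * (\<integral>x. indicator (cell M K j) x \<partial>\<mu>)"
      by (rule integral_mult_right_zero)
    also have "(\<integral>x. indicator (cell M K j) x \<partial>\<mu>) = measure \<mu> (cell M K j)"
      using sets.sets_into_space[OF c[of j]] by (simp add: Int_absorb2)
    finally show "(\<integral>x. stepv M K j * indicator (cell M K j) x \<partial>\<mu>) = stepv M K j * measure \<mu> (cell M K j)" .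
  qed
  finally show "(\<integral>x. stepv M K (idx M K x) \<partial>\<mu>) = gsum M K (\<lambda>j. measure \<mu> (cell M K j))"
    by (simp add: gsum_def)
qed

lemma clamp_int:
  assumes pr: "prob_space \<mu>" and s: "sets \<mu> = sets borel" and M: "M \<ge> 0"
  shows "integrable \<mu> (clampM M)"
proof -
  interpret prob_space \<mu> by fact
  have [measurable]: "clampM M \<in> borel_measurable \<mu>" using s by (simp add: measurable_cong_sets[OF s refl])
  show ?thesis
  proof (rule integrable_const_bound[where B=M])
    have "\<forall>x. norm (clampM M x) \<le> M" using M by (auto simp: clampM_def abs_le_iff max_def min_def)
    then show "AE x in \<mu>. norm (clampM M x) \<le> M" by (intro AE_I2) auto
  qed simp
qed

lemma gsum_approx:
  assumes pr: "prob_space \<mu>" and s: "sets \<mu> = sets borel" and M: "M > 0" and K: "K \<ge> 1"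
  shows "\<bar>gsum M K (\<lambda>j. measure \<mu> (cell M K j)) - (\<integral>x. clampM M x \<partial>\<mu>)\<bar> \<le> 2 * M / real K"
proof -
  interpret prob_space \<mu> by fact
  have i1: "integrable \<mu> (\<lambda>x. stepv M K (idx M K x))" using gsum_int[OF pr s K] by simp
  have i2: "integrable \<mu> (clampM M)" using clamp_int[OF pr s] M by simp
  have i2': "integrable \<mu> (\<lambda>x. clampM M x)" using i2 by simp
  have "gsum M K (\<lambda>j. measure \<mu> (cell M K j)) - (\<integral>x. clampM M x \<partial>\<mu>)
      = (\<integral>x. stepv M K (idx M K x) - clampM M x \<partial>\<mu>)"
    using gsum_int[OF pr s K] i1 i2' by (simp add: integral_diff)
  moreover have "(\<integral>x. stepv M K (idx M K x) - clampM M x \<partial>\<mu>) \<le> 2 * M / real K"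
    by (rule integral_le_const) (use i1 i2' step_approx[OF M K] in \<open>auto simp: abs_le_iff\<close>)
  moreover have "(\<integral>x. - (stepv M K (idx M K x) - clampM M x) \<partial>\<mu>) \<le> 2 * M / real K"
    by (rule integral_le_const) (use i1 i2' step_approx[OF M K] in \<open>auto simp: abs_le_iff\<close>)
  moreover have "(\<integral>x. - (stepv M K (idx M K x) - clampM M x) \<partial>\<mu>) = - (\<integral>x. stepv M K (idx M K x) - clampM M x \<partial>\<mu>)"
    by (rule integral_minus)
  ultimately show ?thesis by (simp only: abs_le_iff)
qed

lemma cells_part:
  assumes K: "K \<ge> 1"
  shows "\<And>i. i < K \<Longrightarrow> cell M K i \<in> sets borel" "disjoint_family_on (cell M K) {..<K}"
    "(\<Union>i<K. cell M K i) = UNIV"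
proof -
  show "\<And>i. i < K \<Longrightarrow> cell M K i \<in> sets borel" by simp
  show "disjoint_family_on (cell M K) {..<K}" by (auto simp: disjoint_family_on_def cell_def)
  show "(\<Union>i<K. cell M K i) = UNIV" using idx_less[OF K] by (auto simp: cell_def)
qed

lemma gsum_meas[measurable]: "gsum M K \<in> borel_measurable (PiM {..<K} (\<lambda>_. borel))"
  unfolding gsum_def by measurable

lemma dp_gsum_eq:
  fixes f :: "real \<Rightarrow> real"
  assumes dp: "is_dirichlet_process N c \<rho>' D" and K: "K \<ge> 1" and fm[measurable]: "f \<in> borel_measurable borel"
  shows "(\<integral>\<omega>. f (gsum M K (\<lambda>j. measure (D \<omega>) (cell M K j))) \<partial>N)
       = (\<integral>v. f (gsum M K v) \<partial>dirichlet K (\<lambda>j. c * measure \<rho>' (cell M K j)))"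
proof -
  have Dm[measurable]: "D \<in> N \<rightarrow>\<^sub>M prob_algebra borel" using dp_meas[OF dp] .
  define T where "T = (\<lambda>\<omega>. \<lambda>j\<in>{..<K}. measure (D \<omega>) (cell M K j))"
  have Tm: "T \<in> N \<rightarrow>\<^sub>M PiM {..<K} (\<lambda>_. borel)"
    unfolding T_def by (intro measurable_restrict measurable_compose[OF Dm measurable_measure_prob_algebra]) simp
  have eq: "distr N (PiM {..<K} (\<lambda>_. borel)) T = dirichlet K (\<lambda>j. c * measure \<rho>' (cell M K j))"
    using dp K cells_part[OF K] unfolding is_dirichlet_process_def T_def by blast
  have "(\<integral>v. f (gsum M K v) \<partial>dirichlet K (\<lambda>j. c * measure \<rho>' (cell M K j)))
      = (\<integral>\<omega>. f (gsum M K (T \<omega>)) \<partial>N)"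
    unfolding eq[symmetric] by (rule integral_distr[OF Tm]) measurable
  also have "\<dots> = (\<integral>\<omega>. f (gsum M K (\<lambda>j. measure (D \<omega>) (cell M K j))) \<partial>N)"
    by (intro Bochner_Integration.integral_cong refl) (simp add: T_def gsum_def)
  finally show ?thesis by simp
qed

lemma dp_clamp_lim:
  fixes f :: "real \<Rightarrow> real"
  assumes dp: "is_dirichlet_process N c \<rho>' D" and M: "M > 0"
    and fc: "continuous_on UNIV f" and fB: "\<And>x. \<bar>f x\<bar> \<le> B"
  shows "(\<lambda>K. \<integral>\<omega>. f (gsum M (Suc K) (\<lambda>j. measure (D \<omega>) (cell M (Suc K) j))) \<partial>N)
     \<longlonglongrightarrow> (\<integral>\<omega>. f (\<integral>x. clampM M x \<partial>D \<omega>) \<partial>N)"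
proof -
  interpret N: prob_space N using dp_prob[OF dp] .
  have Dm[measurable]: "D \<in> N \<rightarrow>\<^sub>M prob_algebra borel" using dp_meas[OF dp] .
  have Dm'[measurable]: "D \<in> N \<rightarrow>\<^sub>M subprob_algebra borel" using measurable_prob_algebraD[OF Dm] .
  have fm[measurable]: "f \<in> borel_measurable borel" using fc by (rule borel_measurable_continuous_onI)
  have mm: "(\<lambda>\<omega>. measure (D \<omega>) (cell M K j)) \<in> borel_measurable N" for K j
    by (intro measurable_compose[OF Dm measurable_measure_prob_algebra]) simp
  show ?thesis
  proof (rule integral_dominated_convergence[where w="\<lambda>_. B"])
    show "(\<lambda>\<omega>. f (\<integral>x. clampM M x \<partial>D \<omega>)) \<in> borel_measurable N" by measurable
    show "(\<lambda>\<omega>. f (gsum M (Suc K) (\<lambda>j. measure (D \<omega>) (cell M (Suc K) j)))) \<in> borel_measurable N" for K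
      unfolding gsum_def by (intro measurable_compose[OF _ fm] borel_measurable_sum borel_measurable_times measurable_const mm) auto
    show "integrable N (\<lambda>_. B)" by simp
    show "AE \<omega> in N. norm (f (gsum M (Suc K) (\<lambda>j. measure (D \<omega>) (cell M (Suc K) j)))) \<le> B" for K
      using fB by simp
    show "AE \<omega> in N. (\<lambda>K. f (gsum M (Suc K) (\<lambda>j. measure (D \<omega>) (cell M (Suc K) j)))) \<longlonglongrightarrow> f (\<integral>x. clampM M x \<partial>D \<omega>)"
    proof (rule AE_I2)
      fix \<omega> assume \<omega>: "\<omega> \<in> space N"
      have pr: "prob_space (D \<omega>)" and s: "sets (D \<omega>) = sets borel" using dp_pt[OF dp \<omega>] by auto
      have "(\<lambda>K. gsum M (Suc K) (\<lambda>j. measure (D \<omega>) (cell M (Suc K) j)) - (\<integral>x. clampM M x \<partial>D \<omega>)) \<longlonglongrightarrow> 0"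
      proof (rule Lim_null_comparison)
        show "eventually (\<lambda>K. norm (gsum M (Suc K) (\<lambda>j. measure (D \<omega>) (cell M (Suc K) j)) - (\<integral>x. clampM M x \<partial>D \<omega>)) \<le> 2 * M / real (Suc K)) sequentially"
        proof (intro always_eventually allI)
          fix K
          show "norm (gsum M (Suc K) (\<lambda>j. measure (D \<omega>) (cell M (Suc K) j)) - (\<integral>x. clampM M x \<partial>D \<omega>)) \<le> 2 * M / real (Suc K)"
            using gsum_approx[OF pr s M, of "Suc K"] by (simp only: real_norm_def)
        qed
        show "(\<lambda>K. 2 * M / real (Suc K)) \<longlonglongrightarrow> 0"
          using LIMSEQ_Suc[OF lim_const_over_n[of "2 * M"]] by simp
      qed
      then have "(\<lambda>K. gsum M (Suc K) (\<lambda>j. measure (D \<omega>) (cell M (Suc K) j))) \<longlonglongrightarrow> (\<integral>x. clampM M x \<partial>D \<omega>)"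
        by (simp add: LIM_zero_iff)
      moreover have "isCont f (\<integral>x. clampM M x \<partial>D \<omega>)"
        using fc by (simp add: continuous_on_eq_continuous_at)
      ultimately show "(\<lambda>K. f (gsum M (Suc K) (\<lambda>j. measure (D \<omega>) (cell M (Suc K) j)))) \<longlonglongrightarrow> f (\<integral>x. clampM M x \<partial>D \<omega>)"
        by (rule isCont_tendsto_compose[rotated])
    qed
  qed
qed

lemma trunc_eq: "truncate_measure M \<rho> = distr \<rho> borel (clampM M)"
  by (simp add: truncate_measure_def clampM_def[abs_def])

lemma trunc_basic:
  assumes "prob_space \<rho>" "sets \<rho> = sets borel"
  shows "prob_space (truncate_measure M \<rho>)" "sets (truncate_measure M \<rho>) = sets borel"
proof -
  have [measurable]: "clampM M \<in> \<rho> \<rightarrow>\<^sub>M borel" using assms(2) by (simp add: measurable_cong_sets[OF assms(2) refl])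
  show "prob_space (truncate_measure M \<rho>)" unfolding trunc_eq
    by (intro prob_space.prob_space_distr assms(1)) simp
  show "sets (truncate_measure M \<rho>) = sets borel" unfolding trunc_eq by simp
qed

lemma trunc_measure:
  assumes s: "sets \<rho> = sets borel" and A: "A \<in> sets borel"
  shows "measure (truncate_measure M \<rho>) A = measure \<rho> (clampM M -` A)"
proof -
  have [measurable]: "clampM M \<in> \<rho> \<rightarrow>\<^sub>M borel" by (simp add: measurable_cong_sets[OF s refl])
  have sp: "space \<rho> = UNIV" using s sets_eq_imp_space_eq by fastforce
  show ?thesis unfolding trunc_eq using A by (subst measure_distr) (auto simp: sp)
qed

lemma trunc_cell:
  assumes s: "sets \<rho> = sets borel" and M: "M \<ge> 0"
  shows "measure (truncate_measure M \<rho>) (cell M K j) = measure \<rho> (cell M K j)"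
proof -
  have "clampM M -` cell M K j = cell M K j" using idx_clamp[OF M] by (auto simp: cell_def)
  then show ?thesis using trunc_measure[OF s cell_sets] by simp
qed

lemma trunc_out:
  assumes s: "sets \<rho> = sets borel" and M: "M \<ge> 0"
  shows "measure (truncate_measure M \<rho>) (- {-M..M}) = 0"
proof -
  have "clampM M -` (- {-M..M}) = {}" using clampM_range[OF M] by auto
  then show ?thesis using trunc_measure[OF s, of "- {-M..M}" M] by simp
qed

lemma main_eq:
  fixes f :: "real \<Rightarrow> real"
  assumes rho: "prob_space \<rho>" "sets \<rho> = sets borel" and c: "c > 0" and M: "M > 0"
    and dpM: "is_dirichlet_process \<Omega> c (truncate_measure M \<rho>) DM"
    and dp: "is_dirichlet_process N c \<rho> D"
    and fc: "continuous_on UNIV f" and fB: "\<And>x. \<bar>f x\<bar> \<le> B"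
  shows "(\<integral>\<omega>. f (\<integral>x. x \<partial>DM \<omega>) \<partial>\<Omega>) = (\<integral>\<omega>. f (\<integral>x. clampM M x \<partial>D \<omega>) \<partial>N)"
proof -
  have fm[measurable]: "f \<in> borel_measurable borel" using fc by (rule borel_measurable_continuous_onI)
  have DMm[measurable]: "DM \<in> \<Omega> \<rightarrow>\<^sub>M subprob_algebra borel" using measurable_prob_algebraD[OF dp_meas[OF dpM]] .
  have tb: "prob_space (truncate_measure M \<rho>)" "sets (truncate_measure M \<rho>) = sets borel"
    using trunc_basic[OF rho] by auto
  have AE0: "AE \<omega> in \<Omega>. measure (DM \<omega>) (- {-M..M}) = 0"
    by (rule dp_null[OF dpM _ tb c]) (use trunc_out[OF rho(2)] M in auto)
  have "(\<integral>\<omega>. f (\<integral>x. x \<partial>DM \<omega>) \<partial>\<Omega>) = (\<integral>\<omega>. f (\<integral>x. clampM M x \<partial>DM \<omega>) \<partial>\<Omega>)"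
  proof (rule integral_cong_AE)
    show "(\<lambda>\<omega>. f (\<integral>x. x \<partial>DM \<omega>)) \<in> borel_measurable \<Omega>" by measurable
    show "(\<lambda>\<omega>. f (\<integral>x. clampM M x \<partial>DM \<omega>)) \<in> borel_measurable \<Omega>" by measurable
    show "AE \<omega> in \<Omega>. f (\<integral>x. x \<partial>DM \<omega>) = f (\<integral>x. clampM M x \<partial>DM \<omega>)"
      using AE0 AE_space
    proof eventually_elim
      case (elim \<omega>)
      have pr: "prob_space (DM \<omega>)" and s: "sets (DM \<omega>) = sets borel" and sp: "space (DM \<omega>) = UNIV"
        using dp_pt[OF dpM elim(2)] by auto
      interpret prob_space "DM \<omega>" by fact
      have "- {-M..M} \<in> null_sets (DM \<omega>)"
        using elim(1) s by (intro null_setsI) (auto simp: emeasure_eq_measure)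
      from AE_not_in[OF this] have "AE x in DM \<omega>. x = clampM M x"
        by eventually_elim (auto simp: clampM_def)
      then have "(\<integral>x. x \<partial>DM \<omega>) = (\<integral>x. clampM M x \<partial>DM \<omega>)"
        by (intro integral_cong_AE) (auto simp: measurable_cong_sets[OF s refl])
      then show ?case by simp
    qed
  qed
  moreover have l1: "(\<lambda>K. \<integral>\<omega>. f (gsum M (Suc K) (\<lambda>j. measure (DM \<omega>) (cell M (Suc K) j))) \<partial>\<Omega>)
     \<longlonglongrightarrow> (\<integral>\<omega>. f (\<integral>x. clampM M x \<partial>DM \<omega>) \<partial>\<Omega>)"
    by (rule dp_clamp_lim[OF dpM M fc fB])
  moreover have l2: "(\<lambda>K. \<integral>\<omega>. f (gsum M (Suc K) (\<lambda>j. measure (D \<omega>) (cell M (Suc K) j))) \<partial>N)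
     \<longlonglongrightarrow> (\<integral>\<omega>. f (\<integral>x. clampM M x \<partial>D \<omega>) \<partial>N)"
    by (rule dp_clamp_lim[OF dp M fc fB])
  moreover have eqK: "(\<integral>\<omega>. f (gsum M (Suc K) (\<lambda>j. measure (DM \<omega>) (cell M (Suc K) j))) \<partial>\<Omega>)
      = (\<integral>\<omega>. f (gsum M (Suc K) (\<lambda>j. measure (D \<omega>) (cell M (Suc K) j))) \<partial>N)" for K
  proof -
    have "(\<integral>\<omega>. f (gsum M (Suc K) (\<lambda>j. measure (DM \<omega>) (cell M (Suc K) j))) \<partial>\<Omega>)
        = (\<integral>v. f (gsum M (Suc K) v) \<partial>dirichlet (Suc K) (\<lambda>j. c * measure (truncate_measure M \<rho>) (cell M (Suc K) j)))"
      by (rule dp_gsum_eq[OF dpM _ fm]) simp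
    also have "(\<lambda>j. c * measure (truncate_measure M \<rho>) (cell M (Suc K) j)) = (\<lambda>j. c * measure \<rho> (cell M (Suc K) j))"
      using trunc_cell[OF rho(2)] M by simp
    also have "(\<integral>v. f (gsum M (Suc K) v) \<partial>dirichlet (Suc K) (\<lambda>j. c * measure \<rho> (cell M (Suc K) j)))
        = (\<integral>\<omega>. f (gsum M (Suc K) (\<lambda>j. measure (D \<omega>) (cell M (Suc K) j))) \<partial>N)"
      by (rule dp_gsum_eq[OF dp _ fm, symmetric]) simp
    finally show ?thesis .
  qed
  ultimately show ?thesis
  proof -
    assume e1: "(\<integral>\<omega>. f (\<integral>x. x \<partial>DM \<omega>) \<partial>\<Omega>) = (\<integral>\<omega>. f (\<integral>x. clampM M x \<partial>DM \<omega>) \<partial>\<Omega>)"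
    from l1 have "(\<lambda>K. \<integral>\<omega>. f (gsum M (Suc K) (\<lambda>j. measure (D \<omega>) (cell M (Suc K) j))) \<partial>N)
     \<longlonglongrightarrow> (\<integral>\<omega>. f (\<integral>x. clampM M x \<partial>DM \<omega>) \<partial>\<Omega>)" by (simp only: eqK)
    from LIMSEQ_unique[OF this l2] e1 show ?thesis by simp
  qed
qed

lemma clamp_lim: "((\<lambda>M. clampM M x) \<longlongrightarrow> x) at_top"
proof (rule tendsto_eventually)
  show "eventually (\<lambda>M. clampM M x = x) at_top"
    using eventually_ge_at_top[of "\<bar>x\<bar>"] by eventually_elim (auto simp: clampM_def)
qed

lemma clamp_int_lim:
  assumes pr: "prob_space \<mu>" and s: "sets \<mu> = sets borel" and int: "integrable \<mu> (\<lambda>x::real. x)"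
  shows "((\<lambda>M. \<integral>x. clampM M x \<partial>\<mu>) \<longlongrightarrow> (\<integral>x. x \<partial>\<mu>)) at_top"
proof (rule integral_dominated_convergence_at_top[where w="\<lambda>x. \<bar>x\<bar>"])
  show "(\<lambda>x::real. x) \<in> borel_measurable \<mu>" by (rule measurable_ident_sets[OF s])
  show "clampM M \<in> borel_measurable \<mu>" for M by (simp add: measurable_cong_sets[OF s refl])
  show "integrable \<mu> (\<lambda>x::real. \<bar>x\<bar>)" using int by (rule integrable_abs)
  show "AE x in \<mu>. ((\<lambda>M. clampM M x) \<longlongrightarrow> x) at_top" by (intro AE_I2 clamp_lim)
  show "\<forall>\<^sub>F M in at_top. AE x in \<mu>. norm (clampM M x) \<le> \<bar>x\<bar>"
    using eventually_ge_at_top[of "0::real"]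
    by eventually_elim (intro AE_I2, auto simp: clampM_def)
qed

theorem lemma2p10:
  fixes \<rho> :: "real measure" and c :: real
    and \<Omega> :: "real \<Rightarrow> 'a measure" and DM :: "real \<Rightarrow> 'a \<Rightarrow> real measure"
    and N :: "'b measure" and D :: "'b \<Rightarrow> real measure"
  assumes "prob_space \<rho>" and "sets \<rho> = sets borel"
    and "(\<integral>\<^sup>+x. ennreal (ln (1 + x\<^sup>2)) \<partial>\<rho>) < \<infinity>"
    and "c > 0"
    and "\<And>M. M > 0 \<Longrightarrow> is_dirichlet_process (\<Omega> M) c (truncate_measure M \<rho>) (DM M)"
    and "is_dirichlet_process N c \<rho> D"
  shows "weak_conv_at_top (\<lambda>M. random_mean_law (\<Omega> M) (DM M)) (random_mean_law N D)"
  unfolding weak_conv_at_top_def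
proof (intro allI impI, elim conjE)
  note rho = assms(1,2) and log = assms(3) and c = assms(4) and dpM = assms(5) and dp = assms(6)
  fix f :: "real \<Rightarrow> real"
  assume fc: "continuous_on UNIV f" and fb: "bounded (range f)"
  obtain B where fB: "\<And>x. \<bar>f x\<bar> \<le> B" using fb by (auto simp: bounded_iff)
  have fm[measurable]: "f \<in> borel_measurable borel" using fc by (rule borel_measurable_continuous_onI)
  interpret N: prob_space N using dp_prob[OF dp] .
  have Dm[measurable]: "D \<in> N \<rightarrow>\<^sub>M subprob_algebra borel" using measurable_prob_algebraD[OF dp_meas[OF dp]] .
  have lhs: "(\<integral>x. f x \<partial>random_mean_law (\<Omega> M) (DM M)) = (\<integral>\<omega>. f (\<integral>x. clampM M x \<partial>D \<omega>) \<partial>N)"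
    if M: "M > 0" for M
  proof -
    have DMm[measurable]: "DM M \<in> \<Omega> M \<rightarrow>\<^sub>M subprob_algebra borel"
      using measurable_prob_algebraD[OF dp_meas[OF dpM[OF M]]] .
    have "(\<integral>x. f x \<partial>random_mean_law (\<Omega> M) (DM M)) = (\<integral>\<omega>. f (\<integral>x. x \<partial>DM M \<omega>) \<partial>\<Omega> M)"
      unfolding random_mean_law_def by (rule integral_distr) measurable
    also have "\<dots> = (\<integral>\<omega>. f (\<integral>x. clampM M x \<partial>D \<omega>) \<partial>N)"
      by (rule main_eq[OF rho c M dpM[OF M] dp fc fB])
    finally show ?thesis .
  qed
  have rhs: "(\<integral>x. f x \<partial>random_mean_law N D) = (\<integral>\<omega>. f (\<integral>x. x \<partial>D \<omega>) \<partial>N)"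
    unfolding random_mean_law_def by (rule integral_distr) measurable
  have lim: "((\<lambda>M. \<integral>\<omega>. f (\<integral>x. clampM M x \<partial>D \<omega>) \<partial>N) \<longlongrightarrow> (\<integral>\<omega>. f (\<integral>x. x \<partial>D \<omega>) \<partial>N)) at_top"
  proof (rule integral_dominated_convergence_at_top[where w="\<lambda>_. B"])
    show "(\<lambda>\<omega>. f (\<integral>x. x \<partial>D \<omega>)) \<in> borel_measurable N" by measurable
    show "(\<lambda>\<omega>. f (\<integral>x. clampM M x \<partial>D \<omega>)) \<in> borel_measurable N" for M by measurable
    show "integrable N (\<lambda>_. B)" by simp
    show "\<forall>\<^sub>F M in at_top. AE \<omega> in N. norm (f (\<integral>x. clampM M x \<partial>D \<omega>)) \<le> B"
      using fB by simp
    show "AE \<omega> in N. ((\<lambda>M. f (\<integral>x. clampM M x \<partial>D \<omega>)) \<longlongrightarrow> f (\<integral>x. x \<partial>D \<omega>)) at_top"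
      using dp_integrable[OF dp rho log c] AE_space
    proof eventually_elim
      case (elim \<omega>)
      have "((\<lambda>M. \<integral>x. clampM M x \<partial>D \<omega>) \<longlongrightarrow> (\<integral>x. x \<partial>D \<omega>)) at_top"
        using dp_pt[OF dp elim(2)] elim(1) by (intro clamp_int_lim) auto
      moreover have "isCont f (\<integral>x. x \<partial>D \<omega>)"
        using fc by (simp add: continuous_on_eq_continuous_at)
      ultimately show ?case by (rule isCont_tendsto_compose[rotated])
    qed
  qed
  have "eventually (\<lambda>M. (\<integral>\<omega>. f (\<integral>x. clampM M x \<partial>D \<omega>) \<partial>N) = (\<integral>x. f x \<partial>random_mean_law (\<Omega> M) (DM M))) at_top"
    using eventually_gt_at_top[of "0::real"] by eventually_elim (simp add: lhs)
  from tendsto_cong[OF this] lim show "((\<lambda>M. \<integral>x. f x \<partial>random_mean_law (\<Omega> M) (DM M)) \<longlongrightarrow> (\<integral>x. f x \<partial>random_mean_law N D)) at_top"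
    by (simp add: rhs)
qed

end
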